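(* Let $\varepsilon\in[0,1)$ and $\mathcal{P},\mathcal{E}\subseteq\mathcal{D}(P)$. Then $$\beta W_{\mathrm{GPO},\varepsilon}(\mathcal{P},\mathcal{E})=D^{\mathcal{E}}_{\min,\varepsilon}(\mathcal{P}\|\mathcal{E}).$$
   Context: All Hilbert spaces are finite-dimensional; $\mathcal{D}(P)$ is the set of density operators on $P$; $T(X,Y)=\tfrac12\|X-Y\|_1$. Battery: qubit $B$ with basis $\{|0\rangle,|1\rangle\}$, $\pi_M=(1-\tfrac1M)|0\rangle\langle0|+\tfrac1M|1\rangle\langle1|$ for $M>1$. For a class of maps $\mathfrak{F}$, the one-shot extractable work into a clean battery is $\beta W_{\mathfrak{F},\varepsilon}(\mathcal{P},\mathcal{E})=\log\sup\{M>1:\exists\mathcal{F}\in\mathfrak{F}\text{ with } T(\mathcal{F}(\rho),|1\rangle\langle1|)\le\varepsilon\ \forall\rho\in\mathcal{P}\text{ and }\mathcal{F}(\tau)=\pi_M\ \forall\tau\in\mathcal{E}\}$. GPO (Gibbs-preserving operations) here means the class of CPTP maps, the Gibbs-preservation requirement being exactly the condition $\mathcal{F}(\tau)=\pi_M$ for all $\tau\in\mathcal{E}$. For $\mathcal{K}$ a set of operators, $V(\mathcal{K})=\operatorname{span}\{\tau-\tau':\tau,\tau'\in\mathcal{K}\}$, and $E\perp V(\mathcal{K})$ means $\operatorname{tr}[EX]=0$ for all $X\in V(\mathcal{K})$. The subspace-constrained min-relative entropy is $$D^{\mathcal{K}}_{\min,\varepsilon}(\mathcal{P}\|\mathcal{E})=-\log\min\Big\{\sup_{\tau\in\mathcal{E}}\operatorname{tr}[\tau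 E]:0\le E\le I,\ E\perp V(\mathcal{K}),\ \sup_{\rho\in\mathcal{P}}\operatorname{tr}[\rho(I-E)]\le\varepsilon\Big\},$$ with $-\log 0=+\infty$. *)

theory Defs
  imports "Jordan_Normal_Form.Char_Poly" "Jordan_Normal_Form.Schur_Decomposition"
    "HOL-Library.Extended_Real"
begin

(* Operators on a d-dimensional Hilbert space P = C^d are complex d x d matrices. *)

definition mtrace :: "complex mat \<Rightarrow> complex" where
  "mtrace A = (\<Sum>i<dim_row A. A $$ (i, i))"

definition psd :: "nat \<Rightarrow> complex mat \<Rightarrow> bool" where
  "psd d A \<longleftrightarrow> A \<in> carrier_mat d d \<and> mat_adjoint A = A \<and>
     (\<forall>v \<in> carrier_vec d. Im (conjugate v \<bullet> (A *\<^sub>v v)) = 0 \<and> 0 \<le> Re (conjugate v \<bullet> (A *\<^sub>v v)))"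

definition dens :: "nat \<Rightarrow> complex mat set" where
  "dens d = {\<rho>. psd d \<rho> \<and> mtrace \<rho> = 1}"

(* trace norm = sum of singular values = sum of square roots of the eigenvalues
   (with algebraic multiplicity) of A^dagger A *)
definition trace_norm :: "complex mat \<Rightarrow> real" where
  "trace_norm A = (let B = mat_adjoint A * A in
     (\<Sum>\<mu> \<in> {\<mu>. poly (char_poly B) \<mu> = 0}. real (order \<mu> (char_poly B)) * sqrt (Re \<mu>)))"

definition trace_dist :: "complex mat \<Rightarrow> complex mat \<Rightarrow> real" where
  "trace_dist X Y = trace_norm (X - Y) / 2"

definition block :: "nat \<Rightarrow> complex mat \<Rightarrow> nat \<Rightarrow> nat \<Rightarrow> complex mat" where
  "block d X a b = mat d d (\<lambda>(r, s). X $$ (a * d + r, b * d + s))"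

(* (id_k \<otimes> F) applied to an operator on C^k \<otimes> C^d *)
definition ampl :: "nat \<Rightarrow> nat \<Rightarrow> nat \<Rightarrow> (complex mat \<Rightarrow> complex mat) \<Rightarrow> complex mat \<Rightarrow> complex mat" where
  "ampl k d e F X = mat (k * e) (k * e)
     (\<lambda>(i, j). F (block d X (i div e) (j div e)) $$ (i mod e, j mod e))"

definition cptp :: "nat \<Rightarrow> nat \<Rightarrow> (complex mat \<Rightarrow> complex mat) \<Rightarrow> bool" where
  "cptp d e F \<longleftrightarrow>
     (\<forall>X \<in> carrier_mat d d. F X \<in> carrier_mat e e) \<and>
     (\<forall>X \<in> carrier_mat d d. \<forall>Y \<in> carrier_mat d d. F (X + Y) = F X + F Y) \<and>
     (\<forall>X \<in> carrier_mat d d. \<forall>c. F (c \<cdot>\<^sub>m X) = c \<cdot>\<^sub>m F X) \<and>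
     (\<forall>X \<in> carrier_mat d d. mtrace (F X) = mtrace X) \<and>
     (\<forall>k. \<forall>X. psd (k * d) X \<longrightarrow> psd (k * e) (ampl k d e F X))"

definition proj0 :: "complex mat" where
  "proj0 = mat 2 2 (\<lambda>(i, j). if i = 0 \<and> j = 0 then 1 else 0)"

definition proj1 :: "complex mat" where
  "proj1 = mat 2 2 (\<lambda>(i, j). if i = 1 \<and> j = 1 then 1 else 0)"

definition piM :: "real \<Rightarrow> complex mat" where
  "piM M = complex_of_real (1 - 1 / M) \<cdot>\<^sub>m proj0 + complex_of_real (1 / M) \<cdot>\<^sub>m proj1"

definition elog :: "ereal \<Rightarrow> ereal" where
  "elog x = (if x = \<infinity> then \<infinity> else ereal (log 2 (real_of_ereal x)))"

definition eneglog :: "ereal \<Rightarrow> ereal" where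
  "eneglog x = (if x = 0 then \<infinity> else ereal (- log 2 (real_of_ereal x)))"

(* admissible battery sizes M > 1 for GPO (Gibbs-preserving CPTP maps) *)
definition gpo_M :: "nat \<Rightarrow> real \<Rightarrow> complex mat set \<Rightarrow> complex mat set \<Rightarrow> real set" where
  "gpo_M d eps Ps Es = {M. M > 1 \<and> (\<exists>F. cptp d 2 F \<and>
       (\<forall>\<rho> \<in> Ps. trace_dist (F \<rho>) proj1 \<le> eps) \<and> (\<forall>\<tau> \<in> Es. F \<tau> = piM M))}"

(* \<beta> W_{GPO,eps}(Ps, Es); the supremum over the empty set of M > 1 is read as 1 *)
definition betaW_GPO :: "nat \<Rightarrow> real \<Rightarrow> complex mat set \<Rightarrow> complex mat set \<Rightarrow> ereal" where
  "betaW_GPO d eps Ps Es = elog (Sup ({1} \<union> ereal ` gpo_M d eps Ps Es))"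

inductive_set Vspan :: "nat \<Rightarrow> complex mat set \<Rightarrow> complex mat set" for d K where
  zero: "0\<^sub>m d d \<in> Vspan d K"
| diff: "\<tau> \<in> K \<Longrightarrow> \<tau>' \<in> K \<Longrightarrow> \<tau> - \<tau>' \<in> Vspan d K"
| add: "X \<in> Vspan d K \<Longrightarrow> Y \<in> Vspan d K \<Longrightarrow> X + Y \<in> Vspan d K"
| smult: "X \<in> Vspan d K \<Longrightarrow> c \<cdot>\<^sub>m X \<in> Vspan d K"

definition perp :: "complex mat \<Rightarrow> complex mat set \<Rightarrow> bool" where
  "perp E V \<longleftrightarrow> (\<forall>X \<in> V. mtrace (E * X) = 0)"

definition Dmin_feasible :: "nat \<Rightarrow> real \<Rightarrow> complex mat set \<Rightarrow> complex mat set \<Rightarrow> complex mat set" where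
  "Dmin_feasible d eps Ps K = {E. psd d E \<and> psd d (1\<^sub>m d - E) \<and> perp E (Vspan d K) \<and>
       (\<forall>\<rho> \<in> Ps. Re (mtrace (\<rho> * (1\<^sub>m d - E))) \<le> eps)}"

(* sup_{\<tau> \<in> Es} tr[\<tau> E]; values are \<ge> 0, the supremum over an empty set is read as 0 *)
definition sup_tr :: "complex mat set \<Rightarrow> complex mat \<Rightarrow> ereal" where
  "sup_tr Es E = Sup ({0} \<union> {ereal (Re (mtrace (\<tau> * E))) | \<tau>. \<tau> \<in> Es})"

definition Dmin :: "nat \<Rightarrow> real \<Rightarrow> complex mat set \<Rightarrow> complex mat set \<Rightarrow> complex mat set \<Rightarrow> ereal" where
  "Dmin d eps Ps K Es = eneglog (Inf (sup_tr Es ` Dmin_feasible d eps Ps K))"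

end

theory Submission
  imports Defs
begin

definition qf :: "nat \<Rightarrow> complex mat \<Rightarrow> (nat \<Rightarrow> complex) \<Rightarrow> complex" where
  "qf n A v = (\<Sum>i<n. \<Sum>j<n. cnj (v i) * A $$ (i, j) * v j)"

definition herm :: "nat \<Rightarrow> complex mat \<Rightarrow> bool" where
  "herm n A \<longleftrightarrow> (\<forall>i<n. \<forall>j<n. A $$ (j, i) = cnj (A $$ (i, j)))"

definition psdq :: "nat \<Rightarrow> complex mat \<Rightarrow> bool" where
  "psdq n A \<longleftrightarrow> A \<in> carrier_mat n n \<and> herm n A \<and> (\<forall>v. Im (qf n A v) = 0 \<and> 0 \<le> Re (qf n A v))"

lemma hermD: "herm n A \<Longrightarrow> i < n \<Longrightarrow> j < n \<Longrightarrow> A $$ (j, i) = cnj (A $$ (i, j))"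
  unfolding herm_def by blast

lemma adj_eq_herm:
  assumes "A \<in> carrier_mat n n"
  shows "mat_adjoint A = A \<longleftrightarrow> herm n A"
proof
  assume h: "mat_adjoint A = A"
  show "herm n A" unfolding herm_def
  proof (intro allI impI)
    fix i j assume "i < n" "j < n"
    then have "mat_adjoint A $$ (j, i) = cnj (A $$ (i, j))" using assms
      by (simp add: mat_adjoint_def mat_of_rows_def)
    then show "A $$ (j, i) = cnj (A $$ (i, j))" using h by simp
  qed
next
  assume h: "herm n A"
  show "mat_adjoint A = A"
  proof (rule eq_matI)
    show "dim_row (mat_adjoint A) = dim_row A" "dim_col (mat_adjoint A) = dim_col A"
      using assms by (auto simp: mat_adjoint_def mat_of_rows_def)
    fix i j assume "i < dim_row A" "j < dim_col A"
    moreover have "A $$ (i, j) = cnj (A $$ (j, i))" using hermD[OF h, of j i] calculation assms by simp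
    ultimately show "mat_adjoint A $$ (i, j) = A $$ (i, j)" using assms
      by (simp add: mat_adjoint_def mat_of_rows_def)
  qed
qed

lemma quad_vec:
  assumes "A \<in> carrier_mat n n" "v \<in> carrier_vec n"
  shows "conjugate v \<bullet> (A *\<^sub>v v) = qf n A (\<lambda>i. v $ i)"
  using assms unfolding qf_def scalar_prod_def
  by (auto simp: lessThan_atLeast0 sum_distrib_left mult.assoc scalar_prod_def intro!: sum.cong)

lemma qf_cong: "(\<And>i. i < n \<Longrightarrow> v i = w i) \<Longrightarrow> qf n A v = qf n A w"
  unfolding qf_def by (auto intro!: sum.cong)

lemma psd_iff: "psd n A \<longleftrightarrow> psdq n A"
proof
  assume p: "psd n A"
  then have c: "A \<in> carrier_mat n n" by (simp add: psd_def)
  show "psdq n A" unfolding psdq_def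
  proof (intro conjI allI)
    show "A \<in> carrier_mat n n" by fact
    show "herm n A" using p c adj_eq_herm by (simp add: psd_def)
    fix v
    have "qf n A v = qf n A (\<lambda>i. vec n v $ i)" by (rule qf_cong) auto
    also have "\<dots> = conjugate (vec n v) \<bullet> (A *\<^sub>v vec n v)" using quad_vec[OF c] by simp
    finally have e: "qf n A v = conjugate (vec n v) \<bullet> (A *\<^sub>v vec n v)" .
    show "Im (qf n A v) = 0" "0 \<le> Re (qf n A v)" using p unfolding e psd_def by auto
  qed
next
  assume p: "psdq n A"
  then have c: "A \<in> carrier_mat n n" and h: "herm n A" and q: "\<And>v. Im (qf n A v) = 0 \<and> 0 \<le> Re (qf n A v)"
    by (auto simp: psdq_def)
  show "psd n A" unfolding psd_def
  proof (intro conjI ballI)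
    show "A \<in> carrier_mat n n" by fact
    show "mat_adjoint A = A" using adj_eq_herm[OF c] h by simp
    fix v :: "complex vec" assume v: "v \<in> carrier_vec n"
    show "Im (conjugate v \<bullet> (A *\<^sub>v v)) = 0" "0 \<le> Re (conjugate v \<bullet> (A *\<^sub>v v))"
      using q quad_vec[OF c v] by auto
  qed
qed

lemma sum_two:
  fixes n :: nat
  assumes "i \<noteq> j" "i < n" "j < n" "\<And>l. l \<noteq> i \<Longrightarrow> l \<noteq> j \<Longrightarrow> f l = 0"
  shows "(\<Sum>l<n. f l) = f i + f j"
proof -
  have "(\<Sum>l<n. f l) = (\<Sum>l\<in>{i,j}. f l)"
    apply (rule sum.mono_neutral_right) using assms by auto
  then show ?thesis using assms by simp
qed

lemma sum_one:
  fixes n :: nat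
  assumes "i < n" "\<And>l. l \<noteq> i \<Longrightarrow> f l = 0"
  shows "(\<Sum>l<n. f l) = f i"
proof -
  have "(\<Sum>l<n. f l) = (\<Sum>l\<in>{i}. f l)"
    apply (rule sum.mono_neutral_right) using assms by auto
  then show ?thesis using assms by simp
qed

lemma qf_one:
  assumes "i < n"
  shows "qf n A (\<lambda>l. if l = i then a else 0) = cnj a * A $$ (i, i) * a"
  unfolding qf_def
  by (subst sum_one[OF assms], simp, subst sum_one[OF assms], auto)

lemma qf_two:
  assumes "i \<noteq> j" "i < n" "j < n"
  shows "qf n A (\<lambda>l. if l = i then a else if l = j then b else 0) =
    cnj a * A $$ (i, i) * a + cnj a * A $$ (i, j) * b + cnj b * A $$ (j, i) * a + cnj b * A $$ (j, j) * b"
  unfolding qf_def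
  apply (subst sum_two[OF assms], use assms in simp)
  apply (subst sum_two[OF assms], use assms in simp)
  using assms by (simp add: not_sym[OF assms(1)])

lemma psdq_diag:
  assumes "psdq n A" "i < n"
  shows "Im (A $$ (i, i)) = 0" "0 \<le> Re (A $$ (i, i))"
proof -
  have "qf n A (\<lambda>l. if l = i then 1 else 0) = A $$ (i, i)" using qf_one[OF assms(2)] by simp
  then show "Im (A $$ (i, i)) = 0" "0 \<le> Re (A $$ (i, i))" using assms(1) unfolding psdq_def by metis+
qed

lemma psdq_zero_row:
  assumes p: "psdq n A" and i: "i < n" and j: "j < n" and z: "A $$ (i, i) = 0"
  shows "A $$ (i, j) = 0"
proof (rule ccontr)
  assume nz: "A $$ (i, j) \<noteq> 0"
  then have ij: "i \<noteq> j" using z by auto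
  define w where "w = A $$ (i, j)"
  define r where "r = (Re w)^2 + (Im w)^2"
  have r: "r > 0" using nz unfolding r_def w_def
    by (metis complex_eqI sum_power2_gt_zero_iff zero_complex.simps)
  have h: "A $$ (j, i) = cnj w" using hermD[of n A i j] p i j unfolding psdq_def w_def by auto
  define x where "x = (Re (A $$ (j, j)) + 1) / (2 * r)"
  define a where "a = - (complex_of_real x) * w"
  have "qf n A (\<lambda>l. if l = i then a else if l = j then 1 else 0) =
    cnj a * A $$ (i, i) * a + cnj a * A $$ (i, j) * 1 + cnj 1 * A $$ (j, i) * a + cnj 1 * A $$ (j, j) * 1"
    by (rule qf_two[OF ij i j])
  also have "\<dots> = cnj a * w + cnj w * a + A $$ (j, j)" using z h unfolding w_def by simp
  finally have "Re (qf n A (\<lambda>l. if l = i then a else if l = j then 1 else 0)) = Re (cnj a * w + cnj w * a + A $$ (j, j))"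
    by simp
  also have "\<dots> = Re (A $$ (j, j)) - 2 * x * r"
    unfolding a_def r_def by (simp add: power2_eq_square algebra_simps)
  finally have e: "Re (qf n A (\<lambda>l. if l = i then a else if l = j then 1 else 0)) = Re (A $$ (j, j)) - 2 * x * r" .
  have "Re (A $$ (j, j)) - 2 * x * r = -1" unfolding x_def using r by (simp add: field_simps)
  then show False using p e unfolding psdq_def by (metis neg_0_le_iff_le not_one_le_zero)
qed

lemma herm_of_real_qf:
  assumes c: "A \<in> carrier_mat n n" and q: "\<And>v. Im (qf n A v) = 0"
  shows "herm n A"
  unfolding herm_def
proof (intro allI impI)
  fix i j assume i: "i < n" and j: "j < n"
  show "A $$ (j, i) = cnj (A $$ (i, j))"
  proof (cases "i = j")
    case True
    have "qf n A (\<lambda>l. if l = i then 1 else 0) = A $$ (i, i)" using qf_one[OF i] by simp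
    then have "Im (A $$ (i, i)) = 0" using q[of "\<lambda>l. if l = i then 1 else 0"] by simp
    then show ?thesis using True by (simp add: complex_eq_iff)
  next
    case False
    have "qf n A (\<lambda>l. if l = i then 1 else if l = j then 1 else 0) =
      cnj 1 * A $$ (i, i) * 1 + cnj 1 * A $$ (i, j) * 1 + cnj 1 * A $$ (j, i) * 1 + cnj 1 * A $$ (j, j) * 1"
      by (rule qf_two[OF False i j])
    then have 1: "Im (A $$ (i, i) + A $$ (i, j) + A $$ (j, i) + A $$ (j, j)) = 0" using q[of "\<lambda>l. if l = i then 1 else if l = j then 1 else 0"] by simp
    have "qf n A (\<lambda>l. if l = i then 1 else if l = j then \<i> else 0) =
      cnj 1 * A $$ (i, i) * 1 + cnj 1 * A $$ (i, j) * \<i> + cnj \<i> * A $$ (j, i) * 1 + cnj \<i> * A $$ (j, j) * \<i>"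
      by (rule qf_two[OF False i j])
    then have 2: "Im (A $$ (i, i) + A $$ (i, j) * \<i> - \<i> * A $$ (j, i) + A $$ (j, j)) = 0" using q[of "\<lambda>l. if l = i then 1 else if l = j then \<i> else 0"] by simp
    have "qf n A (\<lambda>l. if l = i then 1 else 0) = A $$ (i, i)" using qf_one[OF i] by simp
    then have 3: "Im (A $$ (i, i)) = 0" using q[of "\<lambda>l. if l = i then 1 else 0"] by simp
    have "qf n A (\<lambda>l. if l = j then 1 else 0) = A $$ (j, j)" using qf_one[OF j] by simp
    then have 4: "Im (A $$ (j, j)) = 0" using q[of "\<lambda>l. if l = j then 1 else 0"] by simp
    show ?thesis using 1 2 3 4 by (simp add: complex_eq_iff algebra_simps)
  qed
qed

definition bil :: "nat \<Rightarrow> complex mat \<Rightarrow> (nat \<Rightarrow> complex) \<Rightarrow> (nat \<Rightarrow> complex) \<Rightarrow> complex" where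
  "bil n A x y = (\<Sum>i<n. \<Sum>j<n. cnj (x i) * A $$ (i, j) * y j)"

definition tr2 :: "nat \<Rightarrow> complex mat \<Rightarrow> complex mat \<Rightarrow> complex" where
  "tr2 n A B = (\<Sum>p<n. \<Sum>q<n. A $$ (p, q) * B $$ (q, p))"

lemma qf_diff: "qf n Y (\<lambda>l. v l - u l) = qf n Y v - bil n Y v u - bil n Y u v + qf n Y u"
  unfolding qf_def bil_def by (simp add: algebra_simps sum_subtractf sum.distrib)

lemma bil_delta_right:
  assumes "k < n"
  shows "bil n Y v (\<lambda>l. if l = k then t else 0) = (\<Sum>i<n. cnj (v i) * Y $$ (i, k)) * t"
  unfolding bil_def sum_distrib_right
  by (rule sum.cong[OF refl], subst sum_one[OF assms], auto)

lemma bil_delta_left: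
  assumes "k < n"
  shows "bil n Y (\<lambda>l. if l = k then t else 0) v = cnj t * (\<Sum>j<n. Y $$ (k, j) * v j)"
  unfolding bil_def sum_distrib_left
  by (subst sum_one[OF assms], auto simp: mult.assoc)

lemma schur_step:
  assumes p: "psdq n Y" and k: "k < n" and c0: "Y $$ (k, k) \<noteq> 0"
  defines "c \<equiv> Y $$ (k, k)"
  defines "Y' \<equiv> mat n n (\<lambda>(i, j). Y $$ (i, j) - Y $$ (i, k) * Y $$ (k, j) / c)"
  shows "psdq n Y'" "{i. i < n \<and> Y' $$ (i, i) \<noteq> 0} \<subset> {i. i < n \<and> Y $$ (i, i) \<noteq> 0}"
    "\<And>G. tr2 n G Y = tr2 n G Y' + qf n G (\<lambda>p. Y $$ (p, k)) / c"
proof -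
  have h: "herm n Y" and cY: "Y \<in> carrier_mat n n" using p by (auto simp: psdq_def)
  have cr: "cnj c = c" using psdq_diag[OF p k] unfolding c_def by (simp add: complex_eq_iff)
  have hY: "\<And>i j. i < n \<Longrightarrow> j < n \<Longrightarrow> Y $$ (j, i) = cnj (Y $$ (i, j))" using hermD[OF h] by blast
  have cY': "Y' \<in> carrier_mat n n" unfolding Y'_def by simp
  have hY': "herm n Y'" unfolding herm_def
  proof (intro allI impI)
    fix i j assume i: "i < n" and j: "j < n"
    show "Y' $$ (j, i) = cnj (Y' $$ (i, j))"
      unfolding Y'_def using i j k hY[OF i j] hY[OF i k] hY[OF k j] cr
      by (simp add: mult.commute)
  qed
  have cs: "(\<Sum>i<n. cnj (v i) * Y $$ (i, k)) = cnj s" if s_def: "s = (\<Sum>j<n. Y $$ (k, j) * v j)" for v s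
  proof -
    have "cnj s = (\<Sum>j<n. cnj (Y $$ (k, j)) * cnj (v j))" unfolding s_def by simp
    also have "\<dots> = (\<Sum>i<n. cnj (v i) * Y $$ (i, k))"
    proof (rule sum.cong[OF refl])
      fix x assume "x \<in> {..<n}"
      then have "Y $$ (x, k) = cnj (Y $$ (k, x))" using hY[OF k, of x] by simp
      then show "cnj (Y $$ (k, x)) * cnj (v x) = cnj (v x) * Y $$ (x, k)" by simp
    qed
    finally show ?thesis by simp
  qed
  have qfY': "qf n Y' v = qf n Y v - cnj s * s / c" if s_def: "s = (\<Sum>j<n. Y $$ (k, j) * v j)" for v s
  proof -
    note cs = cs[OF s_def]
    have "qf n Y' v = (\<Sum>i<n. \<Sum>j<n. cnj (v i) * Y $$ (i, j) * v j -
        (cnj (v i) * Y $$ (i, k)) * (Y $$ (k, j) * v j) / c)"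
      unfolding qf_def Y'_def by (auto intro!: sum.cong simp: algebra_simps)
    also have "\<dots> = qf n Y v - (\<Sum>i<n. cnj (v i) * Y $$ (i, k)) * (\<Sum>j<n. Y $$ (k, j) * v j) / c"
      unfolding qf_def by (simp add: sum_subtractf sum_divide_distrib[symmetric] sum_product)
    finally show ?thesis using cs s_def by simp
  qed
  show "psdq n Y'" unfolding psdq_def
  proof (intro conjI allI)
    show "Y' \<in> carrier_mat n n" by fact
    show "herm n Y'" by fact
    fix v
    define s where "s = (\<Sum>j<n. Y $$ (k, j) * v j)"
    define w where "w = (\<lambda>l. v l - (if l = k then s / c else 0))"
    have "qf n Y w = qf n Y v - bil n Y v (\<lambda>l. if l = k then s / c else 0)
       - bil n Y (\<lambda>l. if l = k then s / c else 0) v + qf n Y (\<lambda>l. if l = k then s / c else 0)"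
      unfolding w_def by (rule qf_diff)
    also have "\<dots> = qf n Y v - cnj s * (s / c) - cnj (s / c) * s + cnj (s / c) * c * (s / c)"
      using bil_delta_right[OF k, of Y v "s / c"] bil_delta_left[OF k, of Y "s / c" v] qf_one[OF k, of Y "s / c"]
        cs[OF s_def] by (simp add: s_def[symmetric] c_def[symmetric])
    also have "\<dots> = qf n Y v - cnj s * s / c" using cr c0 unfolding c_def[symmetric]
      by (simp add: field_simps)
    finally have "qf n Y' v = qf n Y w" using qfY'[OF s_def] by simp
    then show "Im (qf n Y' v) = 0" "0 \<le> Re (qf n Y' v)" using p by (auto simp: psdq_def)
  qed
  show "{i. i < n \<and> Y' $$ (i, i) \<noteq> 0} \<subset> {i. i < n \<and> Y $$ (i, i) \<noteq> 0}"
  proof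
    show "{i. i < n \<and> Y' $$ (i, i) \<noteq> 0} \<subseteq> {i. i < n \<and> Y $$ (i, i) \<noteq> 0}"
    proof safe
      fix i assume i: "i < n" and nz: "Y' $$ (i, i) \<noteq> 0" and z: "Y $$ (i, i) = 0"
      have "Y $$ (i, k) = 0" by (rule psdq_zero_row[OF p i k z])
      then show False using nz z i unfolding Y'_def by simp
    qed
    have "Y' $$ (k, k) = 0" unfolding Y'_def using k c0 unfolding c_def by simp
    then show "{i. i < n \<and> Y' $$ (i, i) \<noteq> 0} \<noteq> {i. i < n \<and> Y $$ (i, i) \<noteq> 0}"
      using k c0 by blast
  qed
  fix G
  have "tr2 n G Y' = (\<Sum>p<n. \<Sum>q<n. G $$ (p, q) * Y $$ (q, p) - Y $$ (k, p) * G $$ (p, q) * Y $$ (q, k) / c)"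
    unfolding tr2_def Y'_def by (auto intro!: sum.cong simp: algebra_simps)
  also have "\<dots> = tr2 n G Y - (\<Sum>p<n. \<Sum>q<n. Y $$ (k, p) * G $$ (p, q) * Y $$ (q, k)) / c"
    unfolding tr2_def by (simp add: sum_subtractf sum_divide_distrib[symmetric])
  also have "(\<Sum>p<n. \<Sum>q<n. Y $$ (k, p) * G $$ (p, q) * Y $$ (q, k)) = qf n G (\<lambda>p. Y $$ (p, k))"
    unfolding qf_def
  proof (rule sum.cong[OF refl])
    fix p assume "p \<in> {..<n}"
    then have "Y $$ (p, k) = cnj (Y $$ (k, p))" using hY[OF k, of p] by simp
    then show "(\<Sum>q<n. Y $$ (k, p) * G $$ (p, q) * Y $$ (q, k)) = (\<Sum>q<n. cnj (Y $$ (p, k)) * G $$ (p, q) * Y $$ (q, k))"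
      by simp
  qed
  finally show "tr2 n G Y = tr2 n G Y' + qf n G (\<lambda>p. Y $$ (p, k)) / c" by simp
qed

lemma tr2_psd:
  assumes G: "psdq n G" and Y: "psdq n Y"
  shows "Im (tr2 n G Y) = 0 \<and> 0 \<le> Re (tr2 n G Y)"
  using Y
proof (induction "card {i. i < n \<and> Y $$ (i, i) \<noteq> 0}" arbitrary: Y rule: less_induct)
  case less
  show ?case
  proof (cases "\<exists>k<n. Y $$ (k, k) \<noteq> 0")
    case False
    then have "\<And>p q. p < n \<Longrightarrow> q < n \<Longrightarrow> Y $$ (q, p) = 0"
      using psdq_zero_row[OF less.prems] by blast
    then have "tr2 n G Y = 0" unfolding tr2_def by simp
    then show ?thesis by simp
  next
    case True
    then obtain k where k: "k < n" and c0: "Y $$ (k, k) \<noteq> 0" by blast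
    define c where "c = Y $$ (k, k)"
    define Y' where "Y' = mat n n (\<lambda>(i, j). Y $$ (i, j) - Y $$ (i, k) * Y $$ (k, j) / c)"
    note st = schur_step[OF less.prems k c0, folded c_def, folded Y'_def]
    have "card {i. i < n \<and> Y' $$ (i, i) \<noteq> 0} < card {i. i < n \<and> Y $$ (i, i) \<noteq> 0}"
      by (rule psubset_card_mono[OF _ st(2)]) simp
    from less.hyps[OF this st(1)] have ih: "Im (tr2 n G Y') = 0 \<and> 0 \<le> Re (tr2 n G Y')" .
    have q: "Im (qf n G (\<lambda>p. Y $$ (p, k))) = 0 \<and> 0 \<le> Re (qf n G (\<lambda>p. Y $$ (p, k)))"
      using G by (simp add: psdq_def)
    have cc: "Im c = 0" "0 \<le> Re c" using psdq_diag[OF less.prems k] unfolding c_def by auto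
    have "Im (qf n G (\<lambda>p. Y $$ (p, k)) / c) = 0 \<and> 0 \<le> Re (qf n G (\<lambda>p. Y $$ (p, k)) / c)"
      using q cc by (simp add: Im_divide Re_divide)
    then show ?thesis using ih st(3)[of G] by simp
  qed
qed

lemma sum2: "(\<Sum>i<2. f i) = f 0 + f (1::nat)"
  by (simp add: numeral_2_eq_2)

lemma td_formula:
  assumes c: "R \<in> carrier_mat 2 2" and h: "herm 2 R" and t: "mtrace R = 1"
  shows "trace_dist R proj1 = sqrt ((Re (R $$ (0, 0)))^2 + (cmod (R $$ (0, 1)))^2)"
proof -
  define A where "A = R - proj1"
  define r where "r = (Re (R $$ (0, 0)))^2 + (cmod (R $$ (0, 1)))^2"
  have r0: "0 \<le> r" unfolding r_def by simp
  define a where "a = Re (R $$ (0, 0))"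
  have R00: "R $$ (0, 0) = complex_of_real a"
  proof -
    have e: "R $$ (0, 0) = cnj (R $$ (0, 0))" by (rule hermD[OF h]) auto
    have "Im (R $$ (0, 0)) = Im (cnj (R $$ (0, 0)))" using arg_cong[OF e, of Im] .
    then have "Im (R $$ (0, 0)) = 0" by simp
    then show ?thesis unfolding a_def by (simp add: complex_eq_iff)
  qed
  have R10: "R $$ (1, 0) = cnj (R $$ (0, 1))" by (rule hermD[OF h]) auto
  have "R $$ (0, 0) + R $$ (1, 1) = 1" using t c unfolding mtrace_def by (simp add: sum2)
  then have R11: "R $$ (1, 1) = 1 - R $$ (0, 0)" by (metis add_diff_cancel_left')
  have cA: "A \<in> carrier_mat 2 2" unfolding A_def proj1_def by (rule minus_carrier_mat) simp
  have A00: "A $$ (0, 0) = complex_of_real a" using c R00 unfolding A_def proj1_def by simp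
  have A01: "A $$ (0, 1) = R $$ (0, 1)" using c unfolding A_def proj1_def by simp
  have A10: "A $$ (1, 0) = cnj (R $$ (0, 1))" using c R10 unfolding A_def proj1_def by simp
  have A11: "A $$ (1, 1) = - complex_of_real a" using c R11 R00 unfolding A_def proj1_def by simp
  have hA: "herm 2 A" unfolding herm_def
  proof (intro allI impI)
    fix i j :: nat assume "i < 2" "j < 2"
    then have "i = 0 \<or> i = 1" "j = 0 \<or> j = 1" by auto
    then show "A $$ (j, i) = cnj (A $$ (i, j))" using A00 A01 A10 A11 by auto
  qed
  define B where "B = mat_adjoint A * A"
  have B: "B = mat 2 2 (\<lambda>(i, j). if i = j then complex_of_real r else 0)"
  proof (rule eq_matI)
    show "dim_row B = dim_row (mat 2 2 (\<lambda>(i, j). if i = j then complex_of_real r else 0))"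
      "dim_col B = dim_col (mat 2 2 (\<lambda>(i, j). if i = j then complex_of_real r else 0))"
      unfolding B_def using cA adj_eq_herm[OF cA] hA by auto
    fix i j assume "i < dim_row (mat 2 2 (\<lambda>(i, j). if i = j then complex_of_real r else 0))"
      "j < dim_col (mat 2 2 (\<lambda>(i, j). if i = j then complex_of_real r else 0))"
    then have ij: "i < 2" "j < 2" by auto
    have "B $$ (i, j) = (\<Sum>l<2. A $$ (i, l) * A $$ (l, j))"
      unfolding B_def using adj_eq_herm[OF cA] hA ij cA
      by (simp add: scalar_prod_def lessThan_atLeast0)
    also have "\<dots> = A $$ (i, 0) * A $$ (0, j) + A $$ (i, 1) * A $$ (1, j)" by (simp add: sum2)
    also have "\<dots> = (if i = j then complex_of_real r else 0)"
    proof -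
      have "i = 0 \<or> i = 1" "j = 0 \<or> j = 1" using ij by auto
      moreover have "cnj (R $$ (0, 1)) * R $$ (0, 1) = complex_of_real ((cmod (R $$ (0, 1)))^2)"
        using complex_norm_square by (simp add: mult.commute)
      ultimately show ?thesis using A00 A01 A10 A11 unfolding r_def a_def[symmetric]
        by (auto simp: power2_eq_square algebra_simps)
    qed
    finally show "B $$ (i, j) = mat 2 2 (\<lambda>(i, j). if i = j then complex_of_real r else 0) $$ (i, j)"
      using ij by simp
  qed
  have cB: "B \<in> carrier_mat 2 2" unfolding B by simp
  have ut: "upper_triangular B" unfolding B upper_triangular_def by auto
  have dg: "diag_mat B = [complex_of_real r, complex_of_real r]"
    unfolding B diag_mat_def by (simp add: numeral_2_eq_2 upt_rec)
  have cp: "char_poly B = [:- complex_of_real r, 1:] ^ 2"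
    using char_poly_upper_triangular[OF cB ut] dg by (simp add: power2_eq_square)
  have roots: "{\<mu>. poly (char_poly B) \<mu> = 0} = {complex_of_real r}"
    unfolding cp by auto
  have "trace_norm A = real (order (complex_of_real r) (char_poly B)) * sqrt (Re (complex_of_real r))"
    unfolding trace_norm_def Let_def B_def[symmetric] roots by simp
  also have "\<dots> = 2 * sqrt r" unfolding cp order_power_n_n by simp
  finally show ?thesis unfolding trace_dist_def A_def[symmetric] r_def by simp
qed

lemma sum_split:
  fixes k m :: nat and f :: "nat \<Rightarrow> 'a::comm_monoid_add"
  shows "(\<Sum>i<k*m. f i) = (\<Sum>a<k. \<Sum>r<m. f (a*m + r))"
proof -
  have "(\<Sum>i<k*m. f i) = (\<Sum>a<k. sum f {a*m..<a*m+m})"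
    using sum.nat_group[of f m k] by simp
  also have "\<dots> = (\<Sum>a<k. \<Sum>r<m. f (a*m + r))"
  proof (rule sum.cong[OF refl])
    fix a
    have "sum f {a*m..<a*m+m} = sum f {0 + a*m..<m + a*m}" by (simp add: add.commute)
    also have "\<dots> = (\<Sum>r = 0..<m. f (r + a*m))" by (rule sum.shift_bounds_nat_ivl)
    finally show "sum f {a*m..<a*m+m} = (\<Sum>r<m. f (a*m + r))" by (simp add: lessThan_atLeast0 add.commute)
  qed
  finally show ?thesis .
qed

definition Yof :: "nat \<Rightarrow> nat \<Rightarrow> complex mat \<Rightarrow> (nat \<Rightarrow> complex) \<Rightarrow> complex mat" where
  "Yof k d X u = mat d d (\<lambda>(p, q). \<Sum>a<k. \<Sum>b<k. cnj (u a) * u b * X $$ (a*d+p, b*d+q))"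

lemma qf_Yof:
  "qf d (Yof k d X u) w = qf (k*d) X (\<lambda>i. u (i div d) * w (i mod d))"
proof -
  have dm: "(a*d+p) div d = a" "(a*d+p) mod d = p" if "p < d" for a p
    using that by auto
  define V where "V = (\<lambda>i. u (i div d) * w (i mod d))"
  have V: "V (a*d+p) = u a * w p" if "p < d" for a p unfolding V_def using dm[OF that] by simp
  have "qf (k*d) X V = (\<Sum>a<k. \<Sum>p<d. \<Sum>j<k*d. cnj (V (a*d+p)) * X $$ (a*d+p, j) * V j)"
    unfolding qf_def by (rule sum_split)
  also have "\<dots> = (\<Sum>a<k. \<Sum>p<d. \<Sum>b<k. \<Sum>q<d. cnj (V (a*d+p)) * X $$ (a*d+p, b*d+q) * V (b*d+q))"
    by (simp only: sum_split)
  also have "\<dots> = (\<Sum>a<k. \<Sum>p<d. \<Sum>b<k. \<Sum>q<d. cnj (u a * w p) * X $$ (a*d+p, b*d+q) * (u b * w q))"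
    by (rule sum.cong[OF refl], rule sum.cong[OF refl], rule sum.cong[OF refl], rule sum.cong[OF refl]) (simp add: V)
  finally have "qf (k*d) X (\<lambda>i. u (i div d) * w (i mod d)) =
    (\<Sum>a<k. \<Sum>p<d. \<Sum>b<k. \<Sum>q<d. cnj (u a * w p) * X $$ (a*d+p, b*d+q) * (u b * w q))"
    unfolding V_def .
  also have "\<dots> = (\<Sum>p<d. \<Sum>a<k. \<Sum>b<k. \<Sum>q<d. cnj (u a * w p) * X $$ (a*d+p, b*d+q) * (u b * w q))"
    by (rule sum.swap)
  also have "\<dots> = (\<Sum>p<d. \<Sum>a<k. \<Sum>q<d. \<Sum>b<k. cnj (u a * w p) * X $$ (a*d+p, b*d+q) * (u b * w q))"
    by (rule sum.cong[OF refl], rule sum.cong[OF refl], rule sum.swap)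
  also have "\<dots> = (\<Sum>p<d. \<Sum>q<d. \<Sum>a<k. \<Sum>b<k. cnj (u a * w p) * X $$ (a*d+p, b*d+q) * (u b * w q))"
    by (rule sum.cong[OF refl], rule sum.swap)
  also have "\<dots> = qf d (Yof k d X u) w"
    unfolding qf_def Yof_def
    by (auto intro!: sum.cong simp: sum_distrib_left sum_distrib_right algebra_simps)
  finally show ?thesis by simp
qed

lemma psdq_Yof:
  assumes "psdq (k*d) X"
  shows "psdq d (Yof k d X u)"
proof -
  have q: "Im (qf d (Yof k d X u) w) = 0 \<and> 0 \<le> Re (qf d (Yof k d X u) w)" for w
    unfolding qf_Yof using assms by (simp add: psdq_def)
  have c: "Yof k d X u \<in> carrier_mat d d" unfolding Yof_def by simp
  show ?thesis unfolding psdq_def using q c herm_of_real_qf[OF c] by blast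
qed

lemma sum_one_lt:
  fixes n :: nat
  assumes "i < n" "\<And>l. l < n \<Longrightarrow> l \<noteq> i \<Longrightarrow> f l = 0"
  shows "(\<Sum>l<n. f l) = f i"
proof -
  have "(\<Sum>l<n. f l) = (\<Sum>l\<in>{i}. f l)"
    apply (rule sum.mono_neutral_right) using assms by auto
  then show ?thesis by simp
qed

lemma tr2_Yof:
  "tr2 d H (Yof k d X u) = (\<Sum>a<k. \<Sum>b<k. cnj (u a) * tr2 d H (block d X a b) * u b)"
proof -
  have "tr2 d H (Yof k d X u) = (\<Sum>p<d. \<Sum>q<d. \<Sum>a<k. \<Sum>b<k. H $$ (p, q) * (cnj (u a) * u b * X $$ (a*d+q, b*d+p)))"
    unfolding tr2_def Yof_def by (auto intro!: sum.cong simp: sum_distrib_left)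
  also have "\<dots> = (\<Sum>p<d. \<Sum>a<k. \<Sum>q<d. \<Sum>b<k. H $$ (p, q) * (cnj (u a) * u b * X $$ (a*d+q, b*d+p)))"
    by (rule sum.cong[OF refl], rule sum.swap)
  also have "\<dots> = (\<Sum>a<k. \<Sum>p<d. \<Sum>q<d. \<Sum>b<k. H $$ (p, q) * (cnj (u a) * u b * X $$ (a*d+q, b*d+p)))"
    by (rule sum.swap)
  also have "\<dots> = (\<Sum>a<k. \<Sum>p<d. \<Sum>b<k. \<Sum>q<d. H $$ (p, q) * (cnj (u a) * u b * X $$ (a*d+q, b*d+p)))"
    by (rule sum.cong[OF refl], rule sum.cong[OF refl], rule sum.swap)
  also have "\<dots> = (\<Sum>a<k. \<Sum>b<k. \<Sum>p<d. \<Sum>q<d. H $$ (p, q) * (cnj (u a) * u b * X $$ (a*d+q, b*d+p)))"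
    by (rule sum.cong[OF refl], rule sum.swap)
  also have "\<dots> = (\<Sum>a<k. \<Sum>b<k. cnj (u a) * tr2 d H (block d X a b) * u b)"
    unfolding tr2_def block_def
    by (auto intro!: sum.cong simp: sum_distrib_left sum_distrib_right algebra_simps)
  finally show ?thesis .
qed

lemma ampl_psdq:
  assumes H: "\<And>r. r < 2 \<Longrightarrow> psdq d (H r)" and X: "psdq (k*d) X"
  defines "Z \<equiv> mat (k*2) (k*2) (\<lambda>(i, j). if i mod 2 = j mod 2
      then tr2 d (H (i mod 2)) (block d X (i div 2) (j div 2)) else 0)"
  shows "psdq (k*2) Z"
proof -
  have cZ: "Z \<in> carrier_mat (k*2) (k*2)" unfolding Z_def by simp
  have Zab: "Z $$ (a*2+r, b*2+s) = (if r = s then tr2 d (H r) (block d X a b) else 0)"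
    if "a < k" "b < k" "r < 2" "s < 2" for a b r s
  proof -
    have "a*2+r < k*2" "b*2+s < k*2" using that by auto
    moreover have "(a*2+r) div 2 = a" "(a*2+r) mod 2 = r" "(b*2+s) div 2 = b" "(b*2+s) mod 2 = s"
      using that by auto
    ultimately show ?thesis unfolding Z_def by simp
  qed
  have q: "qf (k*2) Z v = (\<Sum>r<2. tr2 d (H r) (Yof k d X (\<lambda>a. v (a*2+r))))" for v
  proof -
    have "qf (k*2) Z v = (\<Sum>a<k. \<Sum>r<2. \<Sum>j<k*2. cnj (v (a*2+r)) * Z $$ (a*2+r, j) * v j)"
      unfolding qf_def by (rule sum_split)
    also have "\<dots> = (\<Sum>a<k. \<Sum>r<2. \<Sum>b<k. \<Sum>s<2. cnj (v (a*2+r)) * Z $$ (a*2+r, b*2+s) * v (b*2+s))"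
      by (simp only: sum_split)
    also have "\<dots> = (\<Sum>a<k. \<Sum>r<2. \<Sum>b<k. cnj (v (a*2+r)) * tr2 d (H r) (block d X a b) * v (b*2+r))"
    proof (intro sum.cong refl)
      fix a r b assume "a \<in> {..<k}" "r \<in> {..<2::nat}" "b \<in> {..<k}"
      then show "(\<Sum>s<2. cnj (v (a*2+r)) * Z $$ (a*2+r, b*2+s) * v (b*2+s)) =
          cnj (v (a*2+r)) * tr2 d (H r) (block d X a b) * v (b*2+r)"
        using Zab by (subst sum_one_lt[of r]) auto
    qed
    also have "\<dots> = (\<Sum>r<2. \<Sum>a<k. \<Sum>b<k. cnj (v (a*2+r)) * tr2 d (H r) (block d X a b) * v (b*2+r))"
      by (rule sum.swap)
    also have "\<dots> = (\<Sum>r<2. tr2 d (H r) (Yof k d X (\<lambda>a. v (a*2+r))))"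
      by (simp only: tr2_Yof)
    finally show ?thesis .
  qed
  have nn: "Im (qf (k*2) Z v) = 0 \<and> 0 \<le> Re (qf (k*2) Z v)" for v
  proof -
    have "Im (tr2 d (H r) (Yof k d X (\<lambda>a. v (a*2+r)))) = 0 \<and> 0 \<le> Re (tr2 d (H r) (Yof k d X (\<lambda>a. v (a*2+r))))"
      if "r < 2" for r
      by (rule tr2_psd[OF H[OF that] psdq_Yof[OF X]])
    note a = this[of 0] this[of 1]
    show ?thesis unfolding q sum2 using a by simp
  qed
  show ?thesis unfolding psdq_def using cZ nn herm_of_real_qf[OF cZ] by blast
qed

lemma tr2_add: "X \<in> carrier_mat d d \<Longrightarrow> Y \<in> carrier_mat d d \<Longrightarrow> tr2 d H (X + Y) = tr2 d H X + tr2 d H Y"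
proof -
  assume X: "X \<in> carrier_mat d d" and Y: "Y \<in> carrier_mat d d"
  have "tr2 d H (X + Y) = (\<Sum>p<d. \<Sum>q<d. H $$ (p, q) * X $$ (q, p) + H $$ (p, q) * Y $$ (q, p))"
    unfolding tr2_def using X Y by (intro sum.cong refl) (simp add: algebra_simps)
  then show ?thesis unfolding tr2_def by (simp only: sum.distrib)
qed

lemma tr2_minus: "X \<in> carrier_mat d d \<Longrightarrow> Y \<in> carrier_mat d d \<Longrightarrow> tr2 d H (X - Y) = tr2 d H X - tr2 d H Y"
proof -
  assume X: "X \<in> carrier_mat d d" and Y: "Y \<in> carrier_mat d d"
  have "tr2 d H (X - Y) = (\<Sum>p<d. \<Sum>q<d. H $$ (p, q) * X $$ (q, p) - H $$ (p, q) * Y $$ (q, p))"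
    unfolding tr2_def using X Y by (intro sum.cong refl) (simp add: algebra_simps)
  then show ?thesis unfolding tr2_def by (simp only: sum_subtractf)
qed

lemma tr2_smult: "X \<in> carrier_mat d d \<Longrightarrow> tr2 d H (c \<cdot>\<^sub>m X) = c * tr2 d H X"
proof -
  assume X: "X \<in> carrier_mat d d"
  have "tr2 d H (c \<cdot>\<^sub>m X) = (\<Sum>p<d. \<Sum>q<d. c * (H $$ (p, q) * X $$ (q, p)))"
    unfolding tr2_def using X by (intro sum.cong refl) (simp add: algebra_simps)
  then show ?thesis unfolding tr2_def by (simp only: sum_distrib_left)
qed

lemma tr2_minus_left: "A \<in> carrier_mat d d \<Longrightarrow> B \<in> carrier_mat d d \<Longrightarrow> tr2 d (A - B) X = tr2 d A X - tr2 d B X"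
proof -
  assume X: "A \<in> carrier_mat d d" and Y: "B \<in> carrier_mat d d"
  have "tr2 d (A - B) X = (\<Sum>p<d. \<Sum>q<d. A $$ (p, q) * X $$ (q, p) - B $$ (p, q) * X $$ (q, p))"
    unfolding tr2_def using X Y by (intro sum.cong refl) (simp add: algebra_simps)
  then show ?thesis unfolding tr2_def by (simp only: sum_subtractf)
qed

lemma tr2_one: "tr2 d (1\<^sub>m d) X = (\<Sum>p<d. X $$ (p, p))"
  unfolding tr2_def by (rule sum.cong[OF refl], subst sum_one_lt, auto)

lemma mtrace_carrier: "X \<in> carrier_mat d d \<Longrightarrow> mtrace X = (\<Sum>p<d. X $$ (p, p))"
  unfolding mtrace_def by simp

lemma tr2_comm: "tr2 d A B = tr2 d B A"
  unfolding tr2_def by (subst sum.swap) (simp add: mult.commute)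

lemma mtrace_mult: "A \<in> carrier_mat d d \<Longrightarrow> B \<in> carrier_mat d d \<Longrightarrow> mtrace (A * B) = tr2 d A B"
  unfolding mtrace_def tr2_def by (simp add: scalar_prod_def lessThan_atLeast0)

definition Hs :: "nat \<Rightarrow> complex mat \<Rightarrow> nat \<Rightarrow> complex mat" where
  "Hs d G i = (if i = 0 then 1\<^sub>m d - G else G)"

definition Fm :: "nat \<Rightarrow> complex mat \<Rightarrow> complex mat \<Rightarrow> complex mat" where
  "Fm d G X = mat 2 2 (\<lambda>(i, j). if i = j then tr2 d (Hs d G i) X else 0)"

lemma cptp_Fm:
  assumes G: "psdq d G" and IG: "psdq d (1\<^sub>m d - G)"
  shows "cptp d 2 (Fm d G)"
  unfolding cptp_def
proof (intro conjI ballI allI impI)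
  have cG: "G \<in> carrier_mat d d" using G by (simp add: psdq_def)
  fix X :: "complex mat" assume X: "X \<in> carrier_mat d d"
  show "Fm d G X \<in> carrier_mat 2 2" unfolding Fm_def by simp
  {
    fix Y :: "complex mat" assume Y: "Y \<in> carrier_mat d d"
    show "Fm d G (X + Y) = Fm d G X + Fm d G Y"
      by (rule eq_matI) (auto simp: Fm_def tr2_add[OF X Y])
  }
  {
    fix c :: complex
    show "Fm d G (c \<cdot>\<^sub>m X) = c \<cdot>\<^sub>m Fm d G X"
      by (rule eq_matI) (auto simp: Fm_def tr2_smult[OF X])
  }
  show "mtrace (Fm d G X) = mtrace X"
  proof -
    have "mtrace (Fm d G X) = tr2 d (1\<^sub>m d - G) X + tr2 d G X"
      unfolding mtrace_def Fm_def by (simp add: sum2 Hs_def)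
    also have "\<dots> = tr2 d (1\<^sub>m d) X" using tr2_minus_left[OF one_carrier_mat cG] by simp
    also have "\<dots> = mtrace X" using tr2_one mtrace_carrier[OF X] by simp
    finally show ?thesis .
  qed
next
  fix k and X :: "complex mat"
  assume X: "psd (k * d) X"
  have H: "psdq d (Hs d G r)" if "r < 2" for r using G IG unfolding Hs_def by simp
  have "ampl k d 2 (Fm d G) X = mat (k*2) (k*2) (\<lambda>(i, j). if i mod 2 = j mod 2
      then tr2 d (Hs d G (i mod 2)) (block d X (i div 2) (j div 2)) else 0)"
    unfolding ampl_def Fm_def by (rule cong_mat) auto
  then show "psd (k * 2) (ampl k d 2 (Fm d G) X)"
    using ampl_psdq[where H="Hs d G" and k=k and X=X and d=d, OF H] X by (simp add: psd_iff)
qed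

lemma dens_psdq: "\<rho> \<in> dens d \<Longrightarrow> psdq d \<rho> \<and> \<rho> \<in> carrier_mat d d \<and> mtrace \<rho> = 1"
  unfolding dens_def by (auto simp: psd_iff psdq_def)

lemma tr2_one_trace: "X \<in> carrier_mat d d \<Longrightarrow> tr2 d (1\<^sub>m d) X = mtrace X"
  using tr2_one mtrace_carrier by simp

lemma gpo_from_G:
  assumes G: "psdq d G" and IG: "psdq d (1\<^sub>m d - G)" and M: "M > 1"
    and Es: "Es \<subseteq> dens d" and Ps: "Ps \<subseteq> dens d"
    and tau: "\<And>\<tau>. \<tau> \<in> Es \<Longrightarrow> tr2 d G \<tau> = complex_of_real (1 / M)"
    and rho: "\<And>\<rho>. \<rho> \<in> Ps \<Longrightarrow> Re (tr2 d (1\<^sub>m d - G) \<rho>) \<le> eps"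
  shows "M \<in> gpo_M d eps Ps Es"
proof -
  have cG: "G \<in> carrier_mat d d" using G by (simp add: psdq_def)
  have cp: "cptp d 2 (Fm d G)" by (rule cptp_Fm[OF G IG])
  have H0: "tr2 d (1\<^sub>m d - G) X = mtrace X - tr2 d G X" if "X \<in> carrier_mat d d" for X
    using tr2_minus_left[OF one_carrier_mat cG] tr2_one_trace[OF that] by simp
  have Ftau: "Fm d G \<tau> = piM M" if t: "\<tau> \<in> Es" for \<tau>
  proof -
    have t': "\<tau> \<in> carrier_mat d d" "mtrace \<tau> = 1" using dens_psdq[of \<tau> d] t Es by auto
    show ?thesis
    proof (rule eq_matI)
      show "dim_row (Fm d G \<tau>) = dim_row (piM M)" "dim_col (Fm d G \<tau>) = dim_col (piM M)"
        unfolding Fm_def piM_def proj0_def proj1_def by simp_all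
      fix i j assume "i < dim_row (piM M)" "j < dim_col (piM M)"
      then have ij: "i < 2" "j < 2" unfolding piM_def proj0_def proj1_def by auto
      then have "i = 0 \<or> i = 1" "j = 0 \<or> j = 1" by auto
      then show "Fm d G \<tau> $$ (i, j) = piM M $$ (i, j)"
        unfolding Fm_def piM_def proj0_def proj1_def Hs_def
        using H0[OF t'(1)] t'(2) tau[OF t] by auto
    qed
  qed
  have Frho: "trace_dist (Fm d G \<rho>) proj1 \<le> eps" if r: "\<rho> \<in> Ps" for \<rho>
  proof -
    have r': "psdq d \<rho>" "\<rho> \<in> carrier_mat d d" "mtrace \<rho> = 1" using dens_psdq[of \<rho> d] r Ps by auto
    have t0: "Im (tr2 d (1\<^sub>m d - G) \<rho>) = 0 \<and> 0 \<le> Re (tr2 d (1\<^sub>m d - G) \<rho>)"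
      by (rule tr2_psd[OF IG r'(1)])
    have t1: "Im (tr2 d G \<rho>) = 0" using tr2_psd[OF G r'(1)] by simp
    have c2: "Fm d G \<rho> \<in> carrier_mat 2 2" unfolding Fm_def by simp
    have h2: "herm 2 (Fm d G \<rho>)" unfolding herm_def
    proof (intro allI impI)
      fix i j :: nat assume "i < 2" "j < 2"
      then have "i = 0 \<or> i = 1" "j = 0 \<or> j = 1" by auto
      then show "Fm d G \<rho> $$ (j, i) = cnj (Fm d G \<rho> $$ (i, j))"
        unfolding Fm_def Hs_def using t0 t1 by (auto simp: complex_eq_iff)
    qed
    have tr: "mtrace (Fm d G \<rho>) = 1" using cp r' unfolding cptp_def by auto
    have "trace_dist (Fm d G \<rho>) proj1 = sqrt ((Re (Fm d G \<rho> $$ (0, 0)))^2 + (cmod (Fm d G \<rho> $$ (0, 1)))^2)"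
      by (rule td_formula[OF c2 h2 tr])
    also have "\<dots> = Re (tr2 d (1\<^sub>m d - G) \<rho>)" unfolding Fm_def Hs_def using t0 by simp
    also have "\<dots> \<le> eps" by (rule rho[OF r])
    finally show ?thesis .
  qed
  show ?thesis unfolding gpo_M_def using M cp Ftau Frho by blast
qed

definition Um :: "nat \<Rightarrow> nat \<Rightarrow> nat \<Rightarrow> complex mat" where
  "Um d i j = mat d d (\<lambda>(r, s). if r = i \<and> s = j then 1 else 0)"

definition SL :: "nat \<Rightarrow> complex mat \<Rightarrow> (nat \<times> nat) list \<Rightarrow> complex mat" where
  "SL d X L = foldr (\<lambda>(i, j) A. X $$ (i, j) \<cdot>\<^sub>m Um d i j + A) L (0\<^sub>m d d)"

lemma SL_Nil: "SL d X [] = 0\<^sub>m d d" unfolding SL_def by simp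
lemma SL_Cons: "SL d X ((i, j) # L) = X $$ (i, j) \<cdot>\<^sub>m Um d i j + SL d X L" unfolding SL_def by simp

lemma SL_carrier: "SL d X L \<in> carrier_mat d d"
  by (induction L) (auto simp: SL_Nil SL_Cons)

lemma SL_index:
  assumes "r < d" "s < d" "distinct L"
  shows "SL d X L $$ (r, s) = (if (r, s) \<in> set L then X $$ (r, s) else 0)"
  using assms(3)
proof (induction L)
  case Nil
  then show ?case using assms by (simp add: SL_Nil)
next
  case (Cons p L)
  obtain i j where p: "p = (i, j)" by (cases p)
  have c: "SL d X L \<in> carrier_mat d d" by (rule SL_carrier)
  have "SL d X (p # L) $$ (r, s) = X $$ (i, j) * Um d i j $$ (r, s) + SL d X L $$ (r, s)"
    unfolding p SL_Cons using c assms by (simp add: Um_def)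
  then show ?case using Cons assms p by (auto simp: Um_def)
qed

lemma SL_full:
  assumes "X \<in> carrier_mat d d"
  shows "SL d X (List.product [0..<d] [0..<d]) = X"
  by (rule eq_matI) (use assms SL_carrier[of d X] in \<open>auto simp: SL_index distinct_product\<close>)

lemma cptp_lin:
  assumes cp: "cptp d 2 F" and X: "X \<in> carrier_mat d d" and ab: "a < 2" "b < 2"
  shows "F X $$ (a, b) = (\<Sum>i<d. \<Sum>j<d. X $$ (i, j) * F (Um d i j) $$ (a, b))"
proof -
  note that = ab
  have cF: "\<And>Y. Y \<in> carrier_mat d d \<Longrightarrow> F Y \<in> carrier_mat 2 2"
    and aF: "\<And>Y Z. Y \<in> carrier_mat d d \<Longrightarrow> Z \<in> carrier_mat d d \<Longrightarrow> F (Y + Z) = F Y + F Z"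
    and sF: "\<And>Y c. Y \<in> carrier_mat d d \<Longrightarrow> F (c \<cdot>\<^sub>m Y) = c \<cdot>\<^sub>m F Y"
    using cp unfolding cptp_def by blast+
  have cU: "Um d i j \<in> carrier_mat d d" for i j unfolding Um_def by simp
  have z: "F (0\<^sub>m d d) $$ (a, b) = 0"
  proof -
    have "F (0\<^sub>m d d) = F (0 \<cdot>\<^sub>m 0\<^sub>m d d)" by (rule arg_cong[where f=F]) (rule eq_matI, auto)
    also have "\<dots> = 0 \<cdot>\<^sub>m F (0\<^sub>m d d)" by (rule sF) simp
    finally have e: "F (0\<^sub>m d d) = 0 \<cdot>\<^sub>m F (0\<^sub>m d d)" .
    have "(0 \<cdot>\<^sub>m F (0\<^sub>m d d)) $$ (a, b) = 0" using cF[of "0\<^sub>m d d"] that by simp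
    then show ?thesis by (subst e)
  qed
  have ind: "F (SL d X L) $$ (a, b) = (\<Sum>(i, j)\<leftarrow>L. X $$ (i, j) * F (Um d i j) $$ (a, b))" for L
  proof (induction L)
    case Nil
    then show ?case using z by (simp add: SL_Nil)
  next
    case (Cons p L)
    obtain i j where p: "p = (i, j)" by (cases p)
    have "F (SL d X (p # L)) = X $$ (i, j) \<cdot>\<^sub>m F (Um d i j) + F (SL d X L)"
      unfolding p SL_Cons using aF[OF smult_carrier_mat[OF cU] SL_carrier] sF[OF cU] by simp
    then have "F (SL d X (p # L)) $$ (a, b) = X $$ (i, j) * F (Um d i j) $$ (a, b) + F (SL d X L) $$ (a, b)"
      using cF[OF SL_carrier, of X L] cF[OF cU, of i j] that by simp
    then show ?case using Cons p by simp
  qed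
  have "F X $$ (a, b) = (\<Sum>(i, j)\<leftarrow>List.product [0..<d] [0..<d]. X $$ (i, j) * F (Um d i j) $$ (a, b))"
    using ind[of "List.product [0..<d] [0..<d]"] SL_full[OF X] by simp
  also have "\<dots> = (\<Sum>(i, j)\<in>{0..<d} \<times> {0..<d}. X $$ (i, j) * F (Um d i j) $$ (a, b))"
    by (subst sum_list_distinct_conv_sum_set) (auto simp: distinct_product)
  also have "\<dots> = (\<Sum>i<d. \<Sum>j<d. X $$ (i, j) * F (Um d i j) $$ (a, b))"
    by (simp add: sum.cartesian_product lessThan_atLeast0)
  finally show ?thesis .
qed

lemma cptp_pos:
  assumes cp: "cptp d 2 F" and X: "psdq d X"
  shows "psdq 2 (F X)"
proof -
  have cX: "X \<in> carrier_mat d d" using X by (simp add: psdq_def)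
  have cF: "F X \<in> carrier_mat 2 2" using cp cX unfolding cptp_def by blast
  have "psd (1 * d) X" using X by (simp add: psd_iff)
  then have p: "psd (1 * 2) (ampl 1 d 2 F X)" using cp unfolding cptp_def by blast
  have b: "block d X 0 0 = X" unfolding block_def by (rule eq_matI) (use cX in auto)
  have "ampl 1 d 2 F X = F X"
  proof (rule eq_matI)
    fix i j assume "i < dim_row (F X)" "j < dim_col (F X)"
    then have "i < 2" "j < 2" using cF by auto
    then show "ampl 1 d 2 F X $$ (i, j) = F X $$ (i, j)" unfolding ampl_def using b by simp
  qed (use cF in \<open>auto simp: ampl_def\<close>)
  then show ?thesis using p by (simp add: psd_iff)
qed

definition Wv :: "nat \<Rightarrow> (nat \<Rightarrow> complex) \<Rightarrow> complex mat" where
  "Wv d v = mat d d (\<lambda>(i, j). v i * cnj (v j))"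

lemma psdq_Wv: "psdq d (Wv d v)"
proof -
  have c: "Wv d v \<in> carrier_mat d d" unfolding Wv_def by simp
  have q: "qf d (Wv d v) u = (\<Sum>i<d. cnj (u i) * v i) * cnj (\<Sum>j<d. cnj (u j) * v j)" for u
  proof -
    have "(\<Sum>i<d. cnj (u i) * v i) * cnj (\<Sum>j<d. cnj (u j) * v j) =
      (\<Sum>i<d. cnj (u i) * v i) * (\<Sum>j<d. u j * cnj (v j))" by simp
    also have "\<dots> = (\<Sum>i<d. \<Sum>j<d. (cnj (u i) * v i) * (u j * cnj (v j)))" by (rule sum_product)
    also have "\<dots> = qf d (Wv d v) u"
      unfolding qf_def Wv_def by (auto intro!: sum.cong simp: algebra_simps)
    finally show ?thesis by simp
  qed
  have nn: "Im (qf d (Wv d v) u) = 0 \<and> 0 \<le> Re (qf d (Wv d v) u)" for u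
  proof -
    define z where "z = (\<Sum>i<d. cnj (u i) * v i)"
    have "qf d (Wv d v) u = z * cnj z" unfolding q z_def ..
    also have "\<dots> = complex_of_real ((cmod z)^2)" by (metis complex_norm_square)
    finally show ?thesis by simp
  qed
  show ?thesis unfolding psdq_def using c nn herm_of_real_qf[OF c] by blast
qed

lemma qf_minus: "A \<in> carrier_mat d d \<Longrightarrow> B \<in> carrier_mat d d \<Longrightarrow> qf d (A - B) v = qf d A v - qf d B v"
proof -
  assume A: "A \<in> carrier_mat d d" and B: "B \<in> carrier_mat d d"
  have "qf d (A - B) v = (\<Sum>i<d. \<Sum>j<d. cnj (v i) * A $$ (i, j) * v j - cnj (v i) * B $$ (i, j) * v j)"
    unfolding qf_def using A B by (intro sum.cong refl) (simp add: algebra_simps)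
  then show ?thesis unfolding qf_def by (simp only: sum_subtractf)
qed

lemma qf_one_mat: "qf d (1\<^sub>m d) v = (\<Sum>i<d. cnj (v i) * v i)"
  unfolding qf_def by (rule sum.cong[OF refl], subst sum_one_lt, auto)

lemma feasible_from_gpo:
  assumes M: "M \<in> gpo_M d eps Ps Es" and Es: "Es \<subseteq> dens d" and Ps: "Ps \<subseteq> dens d"
  shows "\<exists>E \<in> Dmin_feasible d eps Ps Es. sup_tr Es E \<le> ereal (1 / M)"
proof -
  obtain F where M1: "M > 1" and cp: "cptp d 2 F"
    and rhoF: "\<And>\<rho>. \<rho> \<in> Ps \<Longrightarrow> trace_dist (F \<rho>) proj1 \<le> eps"
    and tauF: "\<And>\<tau>. \<tau> \<in> Es \<Longrightarrow> F \<tau> = piM M"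
    using M unfolding gpo_M_def by blast
  have cF: "\<And>Y. Y \<in> carrier_mat d d \<Longrightarrow> F Y \<in> carrier_mat 2 2"
    and trF: "\<And>Y. Y \<in> carrier_mat d d \<Longrightarrow> mtrace (F Y) = mtrace Y"
    using cp unfolding cptp_def by blast+
  have tr2x2: "mtrace Y = Y $$ (0, 0) + Y $$ (1, 1)" if "Y \<in> carrier_mat 2 2" for Y
    using that unfolding mtrace_def by (simp add: sum2)
  define E where "E = mat d d (\<lambda>(i, j). F (Um d j i) $$ (1, 1))"
  have cE: "E \<in> carrier_mat d d" unfolding E_def by simp
  have trE: "tr2 d E X = F X $$ (1, 1)" if X: "X \<in> carrier_mat d d" for X
  proof -
    have "tr2 d E X = (\<Sum>p<d. \<Sum>q<d. X $$ (q, p) * F (Um d q p) $$ (1, 1))"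
      unfolding tr2_def E_def by (intro sum.cong refl) (simp add: mult.commute)
    also have "\<dots> = (\<Sum>q<d. \<Sum>p<d. X $$ (q, p) * F (Um d q p) $$ (1, 1))" by (rule sum.swap)
    also have "\<dots> = F X $$ (1, 1)" by (rule cptp_lin[OF cp X, symmetric]) auto
    finally show ?thesis .
  qed
  have qfE: "qf d E v = F (Wv d v) $$ (1, 1)" for v
  proof -
    have cW: "Wv d v \<in> carrier_mat d d" unfolding Wv_def by simp
    have "qf d E v = (\<Sum>i<d. \<Sum>j<d. Wv d v $$ (j, i) * F (Um d j i) $$ (1, 1))"
      unfolding qf_def E_def Wv_def by (intro sum.cong refl) (simp add: algebra_simps)
    also have "\<dots> = (\<Sum>j<d. \<Sum>i<d. Wv d v $$ (j, i) * F (Um d j i) $$ (1, 1))" by (rule sum.swap)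
    also have "\<dots> = F (Wv d v) $$ (1, 1)" by (rule cptp_lin[OF cp cW, symmetric]) auto
    finally show ?thesis .
  qed
  have FW: "psdq 2 (F (Wv d v))" for v by (rule cptp_pos[OF cp psdq_Wv])
  have nnE: "Im (qf d E v) = 0 \<and> 0 \<le> Re (qf d E v)" for v
    unfolding qfE using psdq_diag[OF FW, of 1] by simp
  have pE: "psdq d E" unfolding psdq_def using cE nnE herm_of_real_qf[OF cE] by blast
  have cIE: "1\<^sub>m d - E \<in> carrier_mat d d" by (rule minus_carrier_mat[OF cE])
  have qfIE: "qf d (1\<^sub>m d - E) v = F (Wv d v) $$ (0, 0)" for v
  proof -
    have cW: "Wv d v \<in> carrier_mat d d" unfolding Wv_def by simp
    have "qf d (1\<^sub>m d - E) v = (\<Sum>i<d. cnj (v i) * v i) - F (Wv d v) $$ (1, 1)"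
      unfolding qf_minus[OF one_carrier_mat cE] qf_one_mat qfE ..
    also have "(\<Sum>i<d. cnj (v i) * v i) = mtrace (Wv d v)"
    proof -
      have "(\<Sum>i<d. cnj (v i) * v i) = (\<Sum>i<d. Wv d v $$ (i, i))"
        unfolding Wv_def by (intro sum.cong refl) (simp add: mult.commute)
      then show ?thesis using mtrace_carrier[OF cW] by simp
    qed
    also have "\<dots> = F (Wv d v) $$ (0, 0) + F (Wv d v) $$ (1, 1)"
      using trF[OF cW] tr2x2[OF cF[OF cW]] by simp
    finally show ?thesis by simp
  qed
  have nnIE: "Im (qf d (1\<^sub>m d - E) v) = 0 \<and> 0 \<le> Re (qf d (1\<^sub>m d - E) v)" for v
    unfolding qfIE using psdq_diag[OF FW, of 0] by simp
  have pIE: "psdq d (1\<^sub>m d - E)" unfolding psdq_def using cIE nnIE herm_of_real_qf[OF cIE] by blast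
  have tauE: "tr2 d E \<tau> = complex_of_real (1 / M)" if t: "\<tau> \<in> Es" for \<tau>
  proof -
    have "\<tau> \<in> carrier_mat d d" using t Es dens_psdq by blast
    then have "tr2 d E \<tau> = piM M $$ (1, 1)" using trE tauF[OF t] by simp
    then show ?thesis unfolding piM_def proj0_def proj1_def by simp
  qed
  have vs: "X \<in> carrier_mat d d \<and> tr2 d E X = 0" if "X \<in> Vspan d Es" for X
    using that
  proof (induction rule: Vspan.induct)
    case zero
    then show ?case unfolding tr2_def by (auto intro!: sum.neutral)
  next
    case (diff \<tau> \<tau>')
    have c: "\<tau> \<in> carrier_mat d d" "\<tau>' \<in> carrier_mat d d" using diff Es dens_psdq by blast+
    then show ?case using tr2_minus[OF c] tauE diff by (simp add: minus_carrier_mat)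
  next
    case (add X Y)
    then show ?case using tr2_add by simp
  next
    case (smult X c)
    then show ?case using tr2_smult by simp
  qed
  have perpE: "perp E (Vspan d Es)" unfolding perp_def
    using vs mtrace_mult[OF cE] by simp
  have rhoE: "Re (mtrace (\<rho> * (1\<^sub>m d - E))) \<le> eps" if r: "\<rho> \<in> Ps" for \<rho>
  proof -
    have r': "psdq d \<rho>" "\<rho> \<in> carrier_mat d d" "mtrace \<rho> = 1" using dens_psdq[of \<rho> d] r Ps by auto
    have pF: "psdq 2 (F \<rho>)" by (rule cptp_pos[OF cp r'(1)])
    have h2: "herm 2 (F \<rho>)" using pF by (simp add: psdq_def)
    have tF: "mtrace (F \<rho>) = 1" using trF[OF r'(2)] r'(3) by simp
    have "mtrace (\<rho> * (1\<^sub>m d - E)) = tr2 d (1\<^sub>m d - E) \<rho>"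
      using mtrace_mult[OF r'(2) cIE] tr2_comm by simp
    also have "\<dots> = mtrace \<rho> - F \<rho> $$ (1, 1)"
      using tr2_minus_left[OF one_carrier_mat cE] tr2_one_trace[OF r'(2)] trE[OF r'(2)] by simp
    also have "\<dots> = F \<rho> $$ (0, 0)" using r'(3) tF tr2x2[OF cF[OF r'(2)]] by (simp add: algebra_simps eq_diff_eq)
    finally have e: "Re (mtrace (\<rho> * (1\<^sub>m d - E))) = Re (F \<rho> $$ (0, 0))" by simp
    have "Re (F \<rho> $$ (0, 0)) \<le> sqrt ((Re (F \<rho> $$ (0, 0)))^2 + (cmod (F \<rho> $$ (0, 1)))^2)"
      by (meson abs_ge_self dual_order.trans le_add_same_cancel1 real_le_rsqrt zero_le_power2 real_sqrt_abs real_sqrt_le_mono)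
    also have "\<dots> = trace_dist (F \<rho>) proj1" by (rule td_formula[OF cF[OF r'(2)] h2 tF, symmetric])
    also have "\<dots> \<le> eps" by (rule rhoF[OF r])
    finally show ?thesis using e by simp
  qed
  have feas: "E \<in> Dmin_feasible d eps Ps Es"
    unfolding Dmin_feasible_def using pE pIE perpE rhoE by (simp add: psd_iff)
  have "sup_tr Es E \<le> ereal (1 / M)"
    unfolding sup_tr_def
  proof (rule Sup_least)
    fix x assume "x \<in> {0} \<union> {ereal (Re (mtrace (\<tau> * E))) |\<tau>. \<tau> \<in> Es}"
    then show "x \<le> ereal (1 / M)"
    proof
      assume "x \<in> {0}" then show ?thesis using M1 by simp
    next
      assume "x \<in> {ereal (Re (mtrace (\<tau> * E))) |\<tau>. \<tau> \<in> Es}"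
      then obtain \<tau> where t: "\<tau> \<in> Es" and x: "x = ereal (Re (mtrace (\<tau> * E)))" by blast
      have c: "\<tau> \<in> carrier_mat d d" using t Es dens_psdq by blast
      have "mtrace (\<tau> * E) = complex_of_real (1 / M)"
        using mtrace_mult[OF c cE] tr2_comm tauE[OF t] by simp
      then show ?thesis using x by simp
    qed
  qed
  then show ?thesis using feas by blast
qed

lemma qf_lin:
  assumes A: "A \<in> carrier_mat d d" and B: "B \<in> carrier_mat d d"
  shows "qf d (a \<cdot>\<^sub>m A + b \<cdot>\<^sub>m B) v = a * qf d A v + b * qf d B v"
proof -
  have "qf d (a \<cdot>\<^sub>m A + b \<cdot>\<^sub>m B) v = (\<Sum>i<d. \<Sum>j<d. a * (cnj (v i) * A $$ (i, j) * v j) + b * (cnj (v i) * B $$ (i, j) * v j))"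
    unfolding qf_def using A B by (intro sum.cong refl) (simp add: algebra_simps)
  then show ?thesis unfolding qf_def by (simp only: sum.distrib sum_distrib_left)
qed

lemma tr2_lin_left:
  assumes A: "A \<in> carrier_mat d d" and B: "B \<in> carrier_mat d d"
  shows "tr2 d (a \<cdot>\<^sub>m A + b \<cdot>\<^sub>m B) X = a * tr2 d A X + b * tr2 d B X"
proof -
  have "tr2 d (a \<cdot>\<^sub>m A + b \<cdot>\<^sub>m B) X = (\<Sum>p<d. \<Sum>q<d. a * (A $$ (p, q) * X $$ (q, p)) + b * (B $$ (p, q) * X $$ (q, p)))"
    unfolding tr2_def using A B by (intro sum.cong refl) (simp add: algebra_simps)
  then show ?thesis unfolding tr2_def by (simp only: sum.distrib sum_distrib_left)
qed

lemma psdq_comb: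
  assumes A: "psdq d A" and B: "psdq d B" and a: "0 \<le> a" and b: "0 \<le> b"
  shows "psdq d (complex_of_real a \<cdot>\<^sub>m A + complex_of_real b \<cdot>\<^sub>m B)"
proof -
  have cA: "A \<in> carrier_mat d d" and cB: "B \<in> carrier_mat d d" using A B by (auto simp: psdq_def)
  have c: "complex_of_real a \<cdot>\<^sub>m A + complex_of_real b \<cdot>\<^sub>m B \<in> carrier_mat d d" using cA cB by simp
  have nn: "Im (qf d (complex_of_real a \<cdot>\<^sub>m A + complex_of_real b \<cdot>\<^sub>m B) v) = 0 \<and>
     0 \<le> Re (qf d (complex_of_real a \<cdot>\<^sub>m A + complex_of_real b \<cdot>\<^sub>m B) v)" for v
    unfolding qf_lin[OF cA cB] using A B a b by (auto simp: psdq_def)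
  show ?thesis unfolding psdq_def using c nn herm_of_real_qf[OF c] by blast
qed

lemma psdq_one: "psdq d (1\<^sub>m d)"
proof -
  have c: "1\<^sub>m d \<in> carrier_mat d d" by simp
  have t: "cnj z * z = complex_of_real ((cmod z)^2)" for z by (metis complex_norm_square mult.commute)
  have nn: "Im (qf d (1\<^sub>m d) v) = 0 \<and> 0 \<le> Re (qf d (1\<^sub>m d) v)" for v
    unfolding qf_one_mat t by (simp add: sum_nonneg)
  show ?thesis unfolding psdq_def using c nn herm_of_real_qf[OF c] by blast
qed

lemma gpo_from_feasible:
  assumes F: "E \<in> Dmin_feasible d eps Ps Es" and M: "M > 1" and lt: "sup_tr Es E < ereal (1 / M)"
    and Es: "Es \<subseteq> dens d" and Ps: "Ps \<subseteq> dens d" and eps: "0 \<le> eps"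
  shows "M \<in> gpo_M d eps Ps Es"
proof -
  have pE: "psdq d E" and pIE: "psdq d (1\<^sub>m d - E)" and perpE: "perp E (Vspan d Es)"
    and rhoE: "\<And>\<rho>. \<rho> \<in> Ps \<Longrightarrow> Re (mtrace (\<rho> * (1\<^sub>m d - E))) \<le> eps"
    using F unfolding Dmin_feasible_def by (auto simp: psd_iff)
  have cE: "E \<in> carrier_mat d d" using pE by (simp add: psdq_def)
  have cI: "1\<^sub>m d \<in> carrier_mat d d" by simp
  show ?thesis
  proof (cases "Es = {}")
    case True
    have z: "psdq d (1\<^sub>m d - 1\<^sub>m d)"
    proof -
      have "1\<^sub>m d - 1\<^sub>m d = complex_of_real 0 \<cdot>\<^sub>m 1\<^sub>m d + complex_of_real 0 \<cdot>\<^sub>m (1\<^sub>m d :: complex mat)"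
        by (rule eq_matI) auto
      then show ?thesis using psdq_comb[OF psdq_one psdq_one, of 0 0 d] by simp
    qed
    show ?thesis
    proof (rule gpo_from_G[OF psdq_one z M Es Ps])
      fix \<rho> assume r: "\<rho> \<in> Ps"
      have "tr2 d (1\<^sub>m d - 1\<^sub>m d) \<rho> = 0" using tr2_minus_left[OF cI cI] by simp
      then show "Re (tr2 d (1\<^sub>m d - 1\<^sub>m d) \<rho>) \<le> eps" using eps by simp
    qed (use True in simp)
  next
    case False
    then obtain \<tau>0 where t0: "\<tau>0 \<in> Es" by blast
    have dt0: "psdq d \<tau>0" "\<tau>0 \<in> carrier_mat d d" "mtrace \<tau>0 = 1" using dens_psdq[of \<tau>0 d] t0 Es by auto
    define c where "c = tr2 d E \<tau>0"
    have const: "tr2 d E \<tau> = c" if t: "\<tau> \<in> Es" for \<tau>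
    proof -
      have ct: "\<tau> \<in> carrier_mat d d" using dens_psdq t Es by blast
      have "\<tau> - \<tau>0 \<in> Vspan d Es" by (rule Vspan.diff[OF t t0])
      then have "mtrace (E * (\<tau> - \<tau>0)) = 0" using perpE unfolding perp_def by blast
      then have "tr2 d E (\<tau> - \<tau>0) = 0" using mtrace_mult[OF cE minus_carrier_mat[OF dt0(2)]] by simp
      then show ?thesis using tr2_minus[OF ct dt0(2)] unfolding c_def by simp
    qed
    have c1: "Im c = 0 \<and> 0 \<le> Re c" unfolding c_def by (rule tr2_psd[OF pE dt0(1)])
    have c2: "0 \<le> Re (tr2 d (1\<^sub>m d - E) \<tau>0)" using tr2_psd[OF pIE dt0(1)] by simp
    have tIE: "tr2 d (1\<^sub>m d - E) X = mtrace X - tr2 d E X" if "X \<in> carrier_mat d d" for X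
      using tr2_minus_left[OF cI cE] tr2_one_trace[OF that] by simp
    define cr where "cr = Re c"
    have ccr: "c = complex_of_real cr" using c1 unfolding cr_def by (simp add: complex_eq_iff)
    have "ereal cr \<le> sup_tr Es E"
    proof -
      have "mtrace (\<tau>0 * E) = c" using mtrace_mult[OF dt0(2) cE] tr2_comm unfolding c_def by simp
      then have "ereal cr \<in> {0} \<union> {ereal (Re (mtrace (\<tau> * E))) |\<tau>. \<tau> \<in> Es}"
        using t0 unfolding cr_def by blast
      then show ?thesis unfolding sup_tr_def by (rule Sup_upper)
    qed
    then have "ereal cr < ereal (1 / M)" using lt by (rule le_less_trans)
    then have crM: "cr < 1 / M" by simp
    have M1: "1 / M < 1" "0 < 1 / M" using M by auto
    define \<alpha> where "\<alpha> = (1 - 1 / M) / (1 - cr)"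
    have p: "0 < 1 - cr" using crM M1(1) by linarith
    have p2: "0 \<le> 1 - 1 / M" using M1 by simp
    have a0: "0 \<le> \<alpha>" "\<alpha> \<le> 1"
      unfolding \<alpha>_def using p p2 crM by (auto simp: pos_divide_le_eq)
    define G where "G = complex_of_real \<alpha> \<cdot>\<^sub>m E + complex_of_real (1 - \<alpha>) \<cdot>\<^sub>m 1\<^sub>m d"
    have pG: "psdq d G" unfolding G_def by (rule psdq_comb[OF pE psdq_one]) (use a0 in auto)
    have IG: "1\<^sub>m d - G = complex_of_real \<alpha> \<cdot>\<^sub>m (1\<^sub>m d - E) + complex_of_real 0 \<cdot>\<^sub>m 1\<^sub>m d"
      unfolding G_def using cE by (intro eq_matI) (auto simp: algebra_simps)
    have pIG: "psdq d (1\<^sub>m d - G)" unfolding IG by (rule psdq_comb[OF pIE psdq_one]) (use a0 in auto)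
    show ?thesis
    proof (rule gpo_from_G[OF pG pIG M Es Ps])
      fix \<tau> assume t: "\<tau> \<in> Es"
      have ct: "\<tau> \<in> carrier_mat d d" "mtrace \<tau> = 1" using dens_psdq[of \<tau> d] t Es by auto
      have "tr2 d G \<tau> = complex_of_real \<alpha> * c + complex_of_real (1 - \<alpha>) * 1"
        unfolding G_def tr2_lin_left[OF cE cI] const[OF t] tr2_one_trace[OF ct(1)] ct(2) ..
      also have "\<dots> = complex_of_real (1 - \<alpha> * (1 - cr))" unfolding ccr by (simp add: algebra_simps)
      also have "1 - \<alpha> * (1 - cr) = 1 / M"
      proof -
        have "\<alpha> * (1 - cr) = 1 - 1 / M" unfolding \<alpha>_def using p by simp
        then show ?thesis by simp
      qed
      finally show "tr2 d G \<tau> = complex_of_real (1 / M)" .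
    next
      fix \<rho> assume r: "\<rho> \<in> Ps"
      have cr: "\<rho> \<in> carrier_mat d d" using dens_psdq r Ps by blast
      have cIE: "1\<^sub>m d - E \<in> carrier_mat d d" by (rule minus_carrier_mat[OF cE])
      have "tr2 d (1\<^sub>m d - G) \<rho> = complex_of_real \<alpha> * tr2 d (1\<^sub>m d - E) \<rho>"
        unfolding IG tr2_lin_left[OF cIE cI] by simp
      also have "tr2 d (1\<^sub>m d - E) \<rho> = mtrace (\<rho> * (1\<^sub>m d - E))"
        using mtrace_mult[OF cr cIE] tr2_comm by simp
      finally have "Re (tr2 d (1\<^sub>m d - G) \<rho>) = \<alpha> * Re (mtrace (\<rho> * (1\<^sub>m d - E)))" by simp
      also have "\<dots> \<le> \<alpha> * eps" using rhoE[OF r] a0 by (simp add: mult_left_mono)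
      also have "\<dots> \<le> eps" using a0 eps by (simp add: mult_left_le_one_le)
      finally show "Re (tr2 d (1\<^sub>m d - G) \<rho>) \<le> eps" .
    qed
  qed
qed

lemma vspan_const:
  assumes Es: "Es \<subseteq> dens d" and cE: "E \<in> carrier_mat d d"
    and k: "\<And>\<tau>. \<tau> \<in> Es \<Longrightarrow> tr2 d E \<tau> = k"
  shows "perp E (Vspan d Es)"
proof -
  have vs: "X \<in> carrier_mat d d \<and> tr2 d E X = 0" if "X \<in> Vspan d Es" for X
    using that
  proof (induction rule: Vspan.induct)
    case zero
    then show ?case unfolding tr2_def by (auto intro!: sum.neutral)
  next
    case (diff \<tau> \<tau>')
    have c: "\<tau> \<in> carrier_mat d d" "\<tau>' \<in> carrier_mat d d" using diff Es dens_psdq by blast+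
    then show ?case using tr2_minus[OF c] k diff by (simp add: minus_carrier_mat)
  next
    case (add X Y)
    then show ?case using tr2_add by simp
  next
    case (smult X c)
    then show ?case using tr2_smult by simp
  qed
  show ?thesis unfolding perp_def using vs mtrace_mult[OF cE] by simp
qed

lemma one_feasible:
  assumes Es: "Es \<subseteq> dens d" and Ps: "Ps \<subseteq> dens d" and eps: "0 \<le> eps"
  shows "1\<^sub>m d \<in> Dmin_feasible d eps Ps Es" "sup_tr Es (1\<^sub>m d) \<le> 1"
proof -
  have cI: "1\<^sub>m d \<in> carrier_mat d d" by simp
  have z: "psdq d (1\<^sub>m d - 1\<^sub>m d)"
  proof -
    have "1\<^sub>m d - 1\<^sub>m d = complex_of_real 0 \<cdot>\<^sub>m 1\<^sub>m d + complex_of_real 0 \<cdot>\<^sub>m (1\<^sub>m d :: complex mat)"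
      by (rule eq_matI) auto
    then show ?thesis using psdq_comb[OF psdq_one psdq_one, of 0 0 d] by simp
  qed
  have tI: "tr2 d (1\<^sub>m d) \<tau> = 1" if "\<tau> \<in> Es" for \<tau>
    using dens_psdq[of \<tau> d] that Es tr2_one_trace by auto
  have pp: "perp (1\<^sub>m d) (Vspan d Es)" by (rule vspan_const[OF Es cI tI])
  have r: "Re (mtrace (\<rho> * (1\<^sub>m d - 1\<^sub>m d))) \<le> eps" if "\<rho> \<in> Ps" for \<rho>
  proof -
    have c: "\<rho> \<in> carrier_mat d d" using that Ps dens_psdq by blast
    have "mtrace (\<rho> * (1\<^sub>m d - 1\<^sub>m d)) = tr2 d (1\<^sub>m d - 1\<^sub>m d) \<rho>"
      using mtrace_mult[OF c minus_carrier_mat[OF cI]] tr2_comm by simp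
    also have "\<dots> = 0" using tr2_minus_left[OF cI cI] by simp
    finally show ?thesis using eps by simp
  qed
  show "1\<^sub>m d \<in> Dmin_feasible d eps Ps Es"
    unfolding Dmin_feasible_def using psdq_one z pp r by (simp add: psd_iff)
  show "sup_tr Es (1\<^sub>m d) \<le> 1"
    unfolding sup_tr_def
  proof (rule Sup_least)
    fix x assume "x \<in> {0} \<union> {ereal (Re (mtrace (\<tau> * 1\<^sub>m d))) |\<tau>. \<tau> \<in> Es}"
    then show "x \<le> 1"
    proof
      assume "x \<in> {0}" then show ?thesis by simp
    next
      assume "x \<in> {ereal (Re (mtrace (\<tau> * 1\<^sub>m d))) |\<tau>. \<tau> \<in> Es}"
      then obtain \<tau> where t: "\<tau> \<in> Es" and x: "x = ereal (Re (mtrace (\<tau> * 1\<^sub>m d)))" by blast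
      have c: "\<tau> \<in> carrier_mat d d" using t Es dens_psdq by blast
      have "mtrace (\<tau> * 1\<^sub>m d) = 1" using mtrace_mult[OF c cI] tr2_comm tI[OF t] by simp
      then show ?thesis using x by simp
    qed
  qed
qed

lemma sup_tr_nonneg: "0 \<le> sup_tr Es E"
  unfolding sup_tr_def by (rule Sup_upper) simp

theorem theorem4:
  fixes d :: nat and eps :: real and Ps Es :: "complex mat set"
  assumes "0 \<le> eps" and "eps < 1"
    and "Ps \<subseteq> dens d" and "Es \<subseteq> dens d"
  shows "betaW_GPO d eps Ps Es = Dmin d eps Ps Es Es"
proof -
  note eps = assms(1) and Ps = assms(3) and Es = assms(4)
  define S where "S = sup_tr Es ` Dmin_feasible d eps Ps Es"
  define m where "m = Inf S"
  define G where "G = {1} \<union> ereal ` gpo_M d eps Ps Es"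
  have m0: "0 \<le> m" unfolding m_def S_def by (rule Inf_greatest) (auto simp: sup_tr_nonneg)
  have m1: "m \<le> 1"
  proof -
    have "m \<le> sup_tr Es (1\<^sub>m d)" unfolding m_def S_def
      by (rule Inf_lower) (use one_feasible[OF Es Ps eps] in blast)
    then show ?thesis using one_feasible(2)[OF Es Ps eps] by (rule order.trans)
  qed
  have KA: "m \<le> ereal (1 / M)" if MM: "M \<in> gpo_M d eps Ps Es" for M
  proof -
    obtain E where E: "E \<in> Dmin_feasible d eps Ps Es" "sup_tr Es E \<le> ereal (1 / M)"
      using feasible_from_gpo[OF MM Es Ps] by blast
    have "m \<le> sup_tr Es E" unfolding m_def S_def by (rule Inf_lower) (use E in blast)
    then show ?thesis using E(2) by (rule order.trans)
  qed
  have KB: "N \<in> gpo_M d eps Ps Es" if N: "N > 1" "m < ereal (1 / N)" for N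
  proof -
    obtain s where s: "s \<in> S" "s < ereal (1 / N)" using N(2) unfolding m_def by (auto simp: Inf_less_iff)
    then obtain E where E: "E \<in> Dmin_feasible d eps Ps Es" "s = sup_tr Es E" unfolding S_def by blast
    show ?thesis by (rule gpo_from_feasible[OF E(1) N(1)]) (use s E Es Ps eps in auto)
  qed
  have gpo_pos: "M > 1" if "M \<in> gpo_M d eps Ps Es" for M using that unfolding gpo_M_def by blast
  have G1: "1 \<le> Sup G" unfolding G_def by (rule Sup_upper) simp
  have GN: "ereal N \<le> Sup G" if "N \<in> gpo_M d eps Ps Es" for N
    unfolding G_def by (rule Sup_upper) (use that in blast)
  show ?thesis
  proof (cases "m = 0")
    case True
    have "Sup G = \<infinity>"
    proof (rule ccontr)
      assume ne: "Sup G \<noteq> \<infinity>"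
      have "Sup G \<noteq> - \<infinity>" using G1 by auto
      then obtain T where T: "Sup G = ereal T" using ne by (cases "Sup G") auto
      define N where "N = max T 1 + 1"
      have N1: "N > 1" unfolding N_def by simp
      have "m < ereal (1 / N)" using True N1 by simp
      then have "ereal N \<le> Sup G" using GN KB N1 by blast
      then show False using T unfolding N_def by simp
    qed
    then show ?thesis
      unfolding betaW_GPO_def Dmin_def G_def[symmetric] S_def[symmetric] m_def[symmetric] True
      by (simp add: elog_def eneglog_def)
  next
    case False
    then obtain \<mu> where mu: "m = ereal \<mu>" using m0 m1 by (cases m) auto
    have mu0: "0 < \<mu>" using m0 False mu by simp
    have mu1: "\<mu> \<le> 1" using m1 mu by simp
    have "Sup G = ereal (1 / \<mu>)"
    proof (rule antisym)
      show "Sup G \<le> ereal (1 / \<mu>)" unfolding G_def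
      proof (rule Sup_least)
        fix x assume "x \<in> {1} \<union> ereal ` gpo_M d eps Ps Es"
        then show "x \<le> ereal (1 / \<mu>)"
        proof
          assume "x \<in> {1}" then show ?thesis using mu0 mu1 by simp
        next
          assume "x \<in> ereal ` gpo_M d eps Ps Es"
          then obtain M where M: "M \<in> gpo_M d eps Ps Es" "x = ereal M" by blast
          have "\<mu> \<le> 1 / M" using KA[OF M(1)] mu by simp
          then have "M \<le> 1 / \<mu>" using mu0 gpo_pos[OF M(1)] by (simp add: field_simps)
          then show ?thesis using M by simp
        qed
      qed
    next
      show "ereal (1 / \<mu>) \<le> Sup G"
      proof (rule ccontr)
        assume "\<not> ereal (1 / \<mu>) \<le> Sup G"
        then have lt: "Sup G < ereal (1 / \<mu>)" by simp
        have "Sup G \<noteq> - \<infinity>" "Sup G \<noteq> \<infinity>" using G1 lt by auto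
        then obtain T where T: "Sup G = ereal T" by (cases "Sup G") auto
        have T1: "1 \<le> T" "T < 1 / \<mu>" using G1 lt T by auto
        define N where "N = (T + 1 / \<mu>) / 2"
        have N: "T < N" "N < 1 / \<mu>" using T1 unfolding N_def by auto
        have N1: "N > 1" using N T1 by simp
        have "\<mu> < 1 / N" using N(2) mu0 N1 by (simp add: field_simps)
        then have "m < ereal (1 / N)" using mu by simp
        then have "ereal N \<le> Sup G" using GN KB N1 by blast
        then show False using T N by simp
      qed
    qed
    moreover have "log 2 (1 / \<mu>) = - log 2 \<mu>" using mu0 by (simp add: log_divide)
    ultimately show ?thesis
      unfolding betaW_GPO_def Dmin_def G_def[symmetric] S_def[symmetric] m_def[symmetric] mu
      using mu0 by (simp add: elog_def eneglog_def)
  qed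
qed

end
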